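(* For each integer $d \ge 4$, one has $\mathrm{rc}_\ell(\Delta_d) \ge \log_2 \log_2 d$, where $\Delta_d = \{0,e_1,\dots,e_d\} \subseteq \mathbb{Z}^d$.
   Context: For $X, Y \subseteq \mathbb{Z}^d$, $\mathrm{rc}(X,Y)$ is the smallest number of inequalities in a linear system $Ax \le b$ satisfied by all points of $X$ and such that each point of $Y\setminus X$ violates at least one inequality. With $B_t = [-t,t]^d\cap\mathbb{Z}^d$, $\mathrm{rc}_\ell(X) = \max_{t\in\mathbb{Z}_{>0}} \mathrm{rc}(X,B_t)$. $e_i$ denotes the $i$-th standard unit vector. *)

theory Defs
  imports "HOL-Analysis.Analysis" "HOL-Library.Extended_Real"
begin

definition sat_ineq :: "(real^'n) \<times> real \<Rightarrow> int^'n \<Rightarrow> bool" where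
  "sat_ineq ab x \<longleftrightarrow> (\<Sum>i\<in>UNIV. fst ab $ i * of_int (x $ i)) \<le> snd ab"

definition is_rel_system :: "(int^'n) set \<Rightarrow> (int^'n) set \<Rightarrow> ((real^'n) \<times> real) set \<Rightarrow> bool" where
  "is_rel_system X Y S \<longleftrightarrow> finite S \<and> (\<forall>x\<in>X. \<forall>ab\<in>S. sat_ineq ab x)
     \<and> (\<forall>y\<in>Y - X. \<exists>ab\<in>S. \<not> sat_ineq ab y)"

text \<open>rc(X,Y): minimal number of inequalities (infinite if no such system exists).\<close>
definition rc :: "(int^'n) set \<Rightarrow> (int^'n) set \<Rightarrow> enat" where
  "rc X Y = (INF S \<in> {S. is_rel_system X Y S}. enat (card S))"

definition box :: "int \<Rightarrow> (int^'n) set" where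
  "box t = {x. \<forall>i. \<bar>x $ i\<bar> \<le> t}"

definition rc_l :: "(int^'n) set \<Rightarrow> enat" where
  "rc_l X = (SUP t \<in> {t::int. t > 0}. rc X (box t))"

definition unit_simplex :: "(int^'n) set" where
  "unit_simplex = insert 0 {axis i 1 | i. True}"

end

theory Submission
  imports Defs
begin

definition monoish :: "nat set \<Rightarrow> (nat \<Rightarrow> real) \<Rightarrow> bool" where
  "monoish T f \<longleftrightarrow> (\<forall>x\<in>T. \<forall>y\<in>T. x \<le> y \<longrightarrow> f x \<le> f y) \<or> (\<forall>x\<in>T. \<forall>y\<in>T. x \<le> y \<longrightarrow> f y \<le> f x)"

lemma monoish_subset: "monoish T f \<Longrightarrow> T' \<subseteq> T \<Longrightarrow> monoish T' f"
  unfolding monoish_def by blast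

definition chainset :: "nat set \<Rightarrow> (nat \<Rightarrow> real) \<Rightarrow> nat \<Rightarrow> nat set set" where
  "chainset T f p = {U. U \<subseteq> T \<and> p \<in> U \<and> (\<forall>u\<in>U. u \<le> p) \<and> (\<forall>x\<in>U. \<forall>y\<in>U. x \<le> y \<longrightarrow> f x \<le> f y)}"

lemma es:
  fixes T :: "nat set" and f :: "nat \<Rightarrow> real"
  assumes fin: "finite T" and big: "card T > m * m"
  shows "\<exists>T'\<subseteq>T. card T' > m \<and> monoish T' f"
proof (rule ccontr)
  assume no: "\<not> (\<exists>T'\<subseteq>T. card T' > m \<and> monoish T' f)"
  define L where "L p = Max (card ` chainset T f p)" for p
  have finch: "finite (chainset T f p)" for p
    by (rule finite_subset[of _ "Pow T"]) (auto simp: chainset_def fin)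
  have single: "{p} \<in> chainset T f p" if "p \<in> T" for p
    using that by (auto simp: chainset_def)
  have Lge: "card U \<le> L p" if "U \<in> chainset T f p" for U p
    unfolding L_def using that finch by auto
  have Lle: "L p \<le> m" if "p \<in> T" for p
  proof -
    have ne: "chainset T f p \<noteq> {}" using single[OF that] by blast
    have "Max (card ` chainset T f p) \<in> card ` chainset T f p"
      by (rule Max_in) (use finch ne in auto)
    then obtain U where U: "U \<in> chainset T f p" "L p = card U"
      unfolding L_def by blast
    have "monoish U f" using U(1) unfolding chainset_def monoish_def by blast
    moreover have "U \<subseteq> T" using U(1) unfolding chainset_def by blast
    ultimately have "\<not> card U > m" using no by blast
    thus ?thesis using U by simp
  qed
  have L1: "1 \<le> L p" if "p \<in> T" for p
    using Lge[OF single[OF that]] by simp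
  have Linc: "L p < L q" if "p \<in> T" "q \<in> T" "p < q" "f p \<le> f q" for p q
  proof -
    have ne: "chainset T f p \<noteq> {}" using single[OF that(1)] by blast
    have "Max (card ` chainset T f p) \<in> card ` chainset T f p"
      by (rule Max_in) (use finch ne in auto)
    then obtain U where U: "U \<in> chainset T f p" "L p = card U"
      unfolding L_def by blast
    have fU: "finite U" using U(1) fin unfolding chainset_def using finite_subset by blast
    have qU: "q \<notin> U" using U(1) that(3) unfolding chainset_def by force
    have "insert q U \<in> chainset T f q"
    proof -
      have a: "\<forall>u\<in>U. u \<le> p \<and> f u \<le> f p" using U(1) unfolding chainset_def by auto
      show ?thesis using U(1) a that unfolding chainset_def
        by (auto; smt (verit) order.trans less_imp_le)+
    qed
    hence "card (insert q U) \<le> L q" by (rule Lge)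
    thus ?thesis using U(2) fU qU by simp
  qed
  define Lv where "Lv c = {p\<in>T. L p = c}" for c
  have Lvsmall: "card (Lv c) \<le> m" for c
  proof -
    have "monoish (Lv c) f"
      unfolding monoish_def
    proof (rule disjI2, intro ballI impI)
      fix x y assume xy: "x \<in> Lv c" "y \<in> Lv c" "x \<le> y"
      show "f y \<le> f x"
      proof (cases "x = y")
        case False
        hence "x < y" using xy by simp
        thus ?thesis using Linc[of x y] xy unfolding Lv_def by force
      qed simp
    qed
    moreover have "Lv c \<subseteq> T" unfolding Lv_def by blast
    ultimately show ?thesis using no by (meson not_less)
  qed
  have "T = (\<Union>c\<in>{1..m}. Lv c)"
    unfolding Lv_def using L1 Lle by fastforce
  hence "card T \<le> (\<Sum>c\<in>{1..m}. card (Lv c))"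
    by (metis card_UN_le finite_atLeastAtMost)
  also have "\<dots> \<le> (\<Sum>c\<in>{1..m}. m)" by (rule sum_mono) (rule Lvsmall)
  also have "\<dots> = m * m" by simp
  finally show False using big by simp
qed

lemma iter:
  fixes F :: "(nat \<Rightarrow> real) set"
  assumes "finite F"
  shows "finite T \<Longrightarrow> card T > 2 ^ (2 ^ card F) \<Longrightarrow> \<exists>T'\<subseteq>T. card T' > 2 \<and> (\<forall>f\<in>F. monoish T' f)"
  using assms
proof (induction F arbitrary: T rule: finite_induct)
  case empty
  then show ?case by auto
next
  case (insert f F)
  define m :: nat where "m = 2 ^ (2 ^ card F)"
  have "card T > m * m" using insert unfolding m_def
    by (simp add: power_add[symmetric] power_Suc mult_2)
  then obtain T1 where T1: "T1 \<subseteq> T" "card T1 > m" "monoish T1 f"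
    using es[OF insert.prems(1)] by blast
  have "finite T1" using T1(1) insert.prems(1) finite_subset by blast
  then obtain T2 where T2: "T2 \<subseteq> T1" "card T2 > 2" "\<forall>g\<in>F. monoish T2 g"
    using insert.IH T1(2) unfolding m_def by blast
  show ?case using T1 T2 monoish_subset by (intro exI[of _ T2]) auto
qed

lemma sat_axis: "(\<Sum>p\<in>UNIV. (a::real^'n) $ p * of_int (axis i (1::int) $ p)) = a $ i"
proof -
  have eq: "(\<lambda>p. a $ p * of_int (axis i (1::int) $ p)) = (\<lambda>p. if p = i then a $ p else 0)"
    by (auto simp: axis_def)
  show ?thesis unfolding eq by simp
qed

lemma main_bound:
  assumes sys: "is_rel_system (unit_simplex :: (int^'n::finite) set) (box 1) S"
  shows "real CARD('n) \<le> 2 ^ (2 ^ card S)"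
proof (rule ccontr)
  assume "\<not> ?thesis"
  hence dbig: "CARD('n) > 2 ^ (2 ^ card S)"
    by (metis not_le of_nat_less_iff of_nat_numeral of_nat_power)
  obtain idx where idx: "bij_betw idx {0..<CARD('n)} (UNIV::'n set)"
    using ex_bij_betw_nat_finite[of "UNIV::'n set"] by auto
  define F where "F = (\<lambda>ab n. fst ab $ idx n) ` S"
  have finS: "finite S" using sys unfolding is_rel_system_def by blast
  have "card F \<le> card S" unfolding F_def using card_image_le finS by blast
  hence "(2::nat) ^ (2 ^ card F) \<le> 2 ^ (2 ^ card S)" by (intro power_increasing) auto
  hence "card {0..<CARD('n)} > 2 ^ (2 ^ card F)" using dbig by (metis card_atLeastLessThan diff_zero le_less_trans)
  then obtain T where T: "T \<subseteq> {0..<CARD('n)}" "card T > 2" "\<forall>f\<in>F. monoish T f"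
    using iter[of F "{0..<CARD('n)}"] finS unfolding F_def by auto
  have finT: "finite T" using T(1) finite_subset by blast
  have Tne: "T \<noteq> {}" using T(2) by auto
  define i where "i = Min T"
  define j where "j = Max T"
  have "T - {i, j} \<noteq> {}"
  proof
    assume "T - {i,j} = {}"
    hence "T \<subseteq> {i,j}" by blast
    hence "card T \<le> card {i,j}" by (simp add: card_mono)
    also have "\<dots> \<le> 2" by (simp add: card_insert_le_m1)
    finally show False using T(2) by simp
  qed
  then obtain l where l: "l \<in> T" "l \<noteq> i" "l \<noteq> j" by blast
  have iT: "i \<in> T" and jT: "j \<in> T" unfolding i_def j_def using finT Tne by auto
  have il: "i < l" using l finT unfolding i_def by (metis Min_le le_neq_implies_less)
  have lj: "l < j" using l finT unfolding j_def by (metis Max_ge le_neq_implies_less)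
  have inj: "inj_on idx {0..<CARD('n)}" using idx bij_betw_def by blast
  define I where "I = idx i"
  define J where "J = idx j"
  define K where "K = idx l"
  have IK: "I \<noteq> K" using inj il iT l(1) T(1) unfolding I_def K_def inj_on_def
    by (metis less_irrefl subsetD)
  have JK: "J \<noteq> K" using inj lj jT l(1) T(1) unfolding J_def K_def inj_on_def
    by (metis less_irrefl subsetD)
  have IJ: "I \<noteq> J" using inj il lj iT jT T(1) unfolding I_def J_def inj_on_def
    by (metis less_irrefl less_trans subsetD)
  define x :: "int^'n" where "x = axis I 1 + axis J 1 - axis K 1"
  have xc: "x $ p = (if p = I then 1 else 0) + (if p = J then 1 else 0) - (if p = K then 1 else 0)" for p
    unfolding x_def by (simp add: axis_def)
  have xbox: "x \<in> box 1" unfolding box_def using IK JK IJ by (auto simp: xc)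
  have xK: "x $ K = -1" using IK JK by (simp add: xc)
  have xnot: "x \<notin> unit_simplex"
  proof
    assume "x \<in> unit_simplex"
    then consider "x = 0" | p where "x = axis p 1" unfolding unit_simplex_def by blast
    then show False
    proof cases
      case 1 then show ?thesis using xK by simp
    next
      case 2 then show ?thesis using xK by (simp add: axis_def split: if_splits)
    qed
  qed
  obtain ab where ab: "ab \<in> S" "\<not> sat_ineq ab x"
    using sys xbox xnot unfolding is_rel_system_def by blast
  obtain a b where abd: "ab = (a, b)" by fastforce
  have zero_in: "(0::int^'n) \<in> unit_simplex" unfolding unit_simplex_def by blast
  have ax_in: "axis p (1::int) \<in> unit_simplex" for p unfolding unit_simplex_def by blast
  have b0: "0 \<le> b" using sys ab(1) zero_in unfolding is_rel_system_def sat_ineq_def abd by force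
  have ap: "a $ p \<le> b" for p
  proof -
    have "sat_ineq ab (axis p 1)" using sys ab(1) ax_in unfolding is_rel_system_def by blast
    thus ?thesis unfolding sat_ineq_def abd using sat_axis[of a p] by simp
  qed
  have sumx: "(\<Sum>p\<in>UNIV. a $ p * of_int (x $ p)) = a $ I + a $ J - a $ K"
  proof -
    have "(\<Sum>p\<in>UNIV. a $ p * of_int (x $ p)) = (\<Sum>p\<in>UNIV. a $ p * of_int (axis I (1::int) $ p))
       + (\<Sum>p\<in>UNIV. a $ p * of_int (axis J (1::int) $ p)) - (\<Sum>p\<in>UNIV. a $ p * of_int (axis K (1::int) $ p))"
      unfolding x_def by (simp add: sum.distrib sum_subtractf algebra_simps)
    thus ?thesis by (simp only: sat_axis)
  qed
  have "monoish T (\<lambda>n. a $ idx n)" using T(3) ab(1) abd unfolding F_def by force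
  hence "a $ I \<le> a $ K \<or> a $ J \<le> a $ K"
    unfolding monoish_def I_def J_def K_def using iT jT l(1) il lj by auto
  hence "a $ I + a $ J - a $ K \<le> b" using ap[of I] ap[of J] by linarith
  thus False using ab(2) unfolding sat_ineq_def abd using sumx by simp
qed

theorem theorem3p6:
  assumes "CARD('n::finite) \<ge> 4"
  shows "ereal (log 2 (log 2 (real CARD('n)))) \<le> ereal_of_enat (rc_l (unit_simplex :: (int^'n) set))"
proof -
  define d where "d = real CARD('n)"
  have d4: "d \<ge> 4" using assms unfolding d_def by simp
  define N where "N = nat \<lceil>log 2 (log 2 d)\<rceil>"
  have key: "log 2 (log 2 d) \<le> real k" if "d \<le> 2 ^ (2 ^ k)" for k
  proof -
    have "log 2 d \<le> log 2 (2 ^ (2 ^ k))" using that d4 by (subst log_le_cancel_iff) auto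
    also have "\<dots> = real (2 ^ k)" by (rule log_pow_cancel) auto
    also have "\<dots> = 2 ^ k" by simp
    finally have l1: "log 2 d \<le> 2 ^ k" .
    have "log 2 d > 0" using d4 by simp
    hence "log 2 (log 2 d) \<le> log 2 (2 ^ k)" using l1 by (subst log_le_cancel_iff) auto
    also have "\<dots> = k" by (rule log_pow_cancel) auto
    finally show ?thesis .
  qed
  have "enat N \<le> rc (unit_simplex :: (int^'n) set) (box 1)"
    unfolding rc_def
  proof (rule INF_greatest)
    fix S assume "S \<in> {S. is_rel_system (unit_simplex :: (int^'n) set) (box 1) S}"
    hence "d \<le> 2 ^ (2 ^ card S)" using main_bound unfolding d_def by blast
    hence "log 2 (log 2 d) \<le> real (card S)" by (rule key)
    hence "N \<le> card S" unfolding N_def by (simp add: ceiling_le nat_le_iff)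
    thus "enat N \<le> enat (card S)" by simp
  qed
  also have "\<dots> \<le> rc_l (unit_simplex :: (int^'n) set)"
    unfolding rc_l_def by (rule SUP_upper) simp
  finally have "ereal_of_enat (enat N) \<le> ereal_of_enat (rc_l (unit_simplex :: (int^'n) set))"
    by (simp only: ereal_of_enat_le_iff)
  moreover have "ereal (log 2 (log 2 d)) \<le> ereal_of_enat (enat N)"
    unfolding N_def by simp linarith
  ultimately show ?thesis unfolding d_def by (meson order.trans)
qed

end
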